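(* Let $M_{\mathrm{t}}, K, M_{\mathrm{r}}$ be positive integers and let $\bar{\mathbf{W}}=[\bar{\mathbf{W}}_1,\dots,\bar{\mathbf{W}}_K]\in\mathbb{C}^{M_{\mathrm{t}}\times KM_{\mathrm{r}}}$ be any (fully-digital beamforming) matrix of rank $T_{\mathrm{s}}\ge 1$. Let $\bar{\mathbf{W}}=\tilde{\mathbf{V}}_1\tilde{\mathbf{W}}_1$ be a QR decomposition with $\tilde{\mathbf{V}}_1\in\mathbb{C}^{M_{\mathrm{t}}\times T_{\mathrm{s}}}$ semi-unitary ($\tilde{\mathbf{V}}_1^H\tilde{\mathbf{V}}_1=\mathbf{I}_{T_{\mathrm{s}}}$) and $\tilde{\mathbf{W}}_1\in\mathbb{C}^{T_{\mathrm{s}}\times KM_{\mathrm{r}}}$ upper triangular. Let $\tilde{\mathbf{V}}_2=\tilde{\mathbf{V}}_1^H$ and let $\tilde{\mathbf{V}}_2=\tilde{\mathbf{W}}_2\tilde{\mathbf{P}}$ be a QR decomposition with $\tilde{\mathbf{W}}_2\in\mathbb{C}^{T_{\mathrm{s}}\times T_{\mathrm{s}}}$ unitary and $\tilde{\mathbf{P}}\in\mathbb{C}^{T_{\mathrm{s}}\times M_{\mathrm{t}}}$ upper triangular. Let $\mathbf{\Xi}\in\mathbb{C}^{T_{\mathrm{s}}\times T_{\mathrm{s}}}$ be the diagonal matrix whose $i$-th diagonal entry is one half of the largest modulus of the entries of the $i$-th column of $\tilde{\mathbf{P}}^H$, and define $\mathbf{P}\in\mathbb{C}^{M_{\mathrm{t}}\times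 T_{\mathrm{s}}}$ by $\tilde{\mathbf{P}}^H=\mathbf{P}\mathbf{\Xi}$, and $\mathbf{W}_{\mathrm{BB}}=\mathbf{\Xi}\tilde{\mathbf{W}}_2^H\tilde{\mathbf{W}}_1$. Then $\bar{\mathbf{W}}=\mathbf{P}\mathbf{W}_{\mathrm{BB}}$. Moreover, writing $\mathbf{P}^{[i,j]}=a_{[i,j]}e^{\jmath\vartheta_{[i,j]}}$ with amplitude $a_{[i,j]}\ge 0$ and phase $\vartheta_{[i,j]}$, each entry satisfies $\mathbf{P}^{[i,j]}=\mathbf{P}_1^{[i,j]}+\mathbf{P}_2^{[i,j]}$ with the unit-modulus numbers $$\mathbf{P}_1^{[i,j]}=e^{\jmath\left(\cos^{-1}\left(\frac{a_{[i,j]}}{2}\right)+\vartheta_{[i,j]}\right)},\qquad \mathbf{P}_2^{[i,j]}=e^{-\jmath\left(\cos^{-1}\left(\frac{a_{[i,j]}}{2}\right)-\vartheta_{[i,j]}\right)}.$$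
   Context: Setting: hybrid beamforming at a base station with $M_{\mathrm{t}}$ antennas, $T_{\mathrm{s}}$ active RF chains, and $K$ users each with $M_{\mathrm{r}}$ antennas. The analog beamformer $\mathbf{P}\in\mathbb{C}^{M_{\mathrm{t}}\times T_{\mathrm{s}}}$ must have each entry realizable as the sum of two unit-modulus (phase-shifter) complex numbers, i.e. $\mathbf{P}^{[i,j]}=\mathbf{P}_1^{[i,j]}+\mathbf{P}_2^{[i,j]}$ with $|\mathbf{P}_1^{[i,j]}|=|\mathbf{P}_2^{[i,j]}|=1$; $\mathbf{W}_{\mathrm{BB}}$ is the baseband digital beamformer. $\mathbf{X}^{[i,j]}$ denotes the $(i,j)$ entry of a matrix $\mathbf{X}$, $\jmath=\sqrt{-1}$, and $\cos^{-1}$ denotes the principal arccosine. *)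

theory Defs
  imports Complex_Main "Jordan_Normal_Form.Schur_Decomposition" "Jordan_Normal_Form.DL_Rank"
begin

definition half_max_col_diag :: "complex mat \<Rightarrow> complex mat" where
  "half_max_col_diag A = mat (dim_col A) (dim_col A)
     (\<lambda>(i,j). if i = j then complex_of_real (Max ((\<lambda>k. cmod (A $$ (k,i))) ` {..<dim_row A}) / 2) else 0)"

end

theory Submission
  imports Defs
begin


lemma adj_dim[simp]: "dim_row (mat_adjoint A) = dim_col A" "dim_col (mat_adjoint A) = dim_row A"
  unfolding mat_adjoint_def by auto

lemma adj_index[simp]: "i < dim_col A \<Longrightarrow> j < dim_row A \<Longrightarrow> mat_adjoint A $$ (i,j) = conjugate (A $$ (j,i))"
  unfolding mat_adjoint_def by (auto simp: mat_of_rows_def)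

lemma adj_carrier: "A \<in> carrier_mat n m \<Longrightarrow> mat_adjoint A \<in> carrier_mat m n"
  by auto

lemma adj_adj: "mat_adjoint (mat_adjoint (A::complex mat)) = A"
  by (rule eq_matI) auto

lemma adj_mult: "A \<in> carrier_mat n m \<Longrightarrow> B \<in> carrier_mat m p \<Longrightarrow>
  mat_adjoint (A * (B::complex mat)) = mat_adjoint B * mat_adjoint A"
  apply (rule eq_matI)
  apply (auto simp: scalar_prod_def)
  apply (rule sum.cong, auto)
  done

lemma nexp1: "cmod (exp (\<i> * complex_of_real t)) = 1"
  by (simp flip: cis_conv_exp)

lemma nexp2: "cmod (exp (- \<i> * complex_of_real t)) = 1"
  using nexp1[of "-t"] by simp

lemma trig: fixes a \<theta> :: real assumes "0 \<le> a" "a \<le> 2"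
  shows "complex_of_real a * exp (\<i> * complex_of_real \<theta>) =
    exp (\<i> * complex_of_real (arccos (a / 2) + \<theta>)) + exp (- \<i> * complex_of_real (arccos (a / 2) - \<theta>))"
proof -
  have c: "cos (arccos (a/2)) = a/2" using assms by (intro cos_arccos) auto
  show ?thesis
  proof -
  have e1: "\<And>t. exp (\<i> * complex_of_real t) = cis t" by (simp add: cis_conv_exp)
  have e2: "\<And>t. exp (- \<i> * complex_of_real t) = cis (- t)" by (simp add: cis_conv_exp)
  show ?thesis unfolding e1 e2
    by (rule complex_eqI) (simp_all add: cos_add sin_add cos_diff sin_diff c algebra_simps)
  qed
qed


theorem proposition1:
  fixes Mt K Mr Ts :: nat
    and Wbar V1 W1 V2 W2 Pt Xi P WBB :: "complex mat"
  assumes "Mt > 0" and "K > 0" and "Mr > 0"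
    and "Wbar \<in> carrier_mat Mt (K * Mr)"
    and "vec_space.rank Mt Wbar = Ts" and "Ts \<ge> 1"
    and "V1 \<in> carrier_mat Mt Ts" and "W1 \<in> carrier_mat Ts (K * Mr)"
    and "Wbar = V1 * W1" and "mat_adjoint V1 * V1 = 1\<^sub>m Ts" and "upper_triangular W1"
    and "V2 = mat_adjoint V1"
    and "W2 \<in> carrier_mat Ts Ts" and "Pt \<in> carrier_mat Ts Mt"
    and "V2 = W2 * Pt"
    and "mat_adjoint W2 * W2 = 1\<^sub>m Ts" and "W2 * mat_adjoint W2 = 1\<^sub>m Ts"
    and "upper_triangular Pt"
    and "Xi = half_max_col_diag (mat_adjoint Pt)"
    and "P \<in> carrier_mat Mt Ts" and "mat_adjoint Pt = P * Xi"
    and "WBB = Xi * mat_adjoint W2 * W1"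
  shows "Wbar = P * WBB \<and>
    (\<forall>i < Mt. \<forall>j < Ts. \<forall>(a::real) (\<theta>::real).
       a \<ge> 0 \<longrightarrow> P $$ (i,j) = complex_of_real a * exp (\<i> * complex_of_real \<theta>) \<longrightarrow>
       (let P1 = exp (\<i> * complex_of_real (arccos (a / 2) + \<theta>));
            P2 = exp (- \<i> * complex_of_real (arccos (a / 2) - \<theta>))
        in P $$ (i,j) = P1 + P2 \<and> cmod P1 = 1 \<and> cmod P2 = 1))"
  proof -
  note dims = assms(4,7,8,13,14,20)
  have PtH: "mat_adjoint Pt \<in> carrier_mat Mt Ts" using assms(14) by auto
  have W2H: "mat_adjoint W2 \<in> carrier_mat Ts Ts" using assms(13) by auto
  have Xic: "Xi \<in> carrier_mat Ts Ts" using assms(19,14) unfolding half_max_col_diag_def by auto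
  have part1: "Wbar = P * WBB"
  proof -
    have "P * WBB = P * (Xi * mat_adjoint W2 * W1)" using assms(22) by simp
    also have "\<dots> = (P * Xi) * mat_adjoint W2 * W1"
      using dims Xic W2H by (simp add: assoc_mult_mat[of _ Mt Ts _ Ts])
    also have "\<dots> = mat_adjoint Pt * mat_adjoint W2 * W1" using assms(21) by simp
    also have "mat_adjoint Pt * mat_adjoint W2 = mat_adjoint (W2 * Pt)"
      using adj_mult[OF assms(13,14)] by simp
    also have "\<dots> = V1" using assms(12,15) adj_adj by simp
    finally show ?thesis using assms(9) by simp
  qed
  have PP: "Pt * mat_adjoint Pt = 1\<^sub>m Ts"
  proof -
    define Q where "Q = Pt * mat_adjoint Pt"
    have Qc: "Q \<in> carrier_mat Ts Ts" unfolding Q_def using dims PtH by auto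
    have VV: "V2 * mat_adjoint V2 = 1\<^sub>m Ts" using assms(10,12) adj_adj by simp
    have "mat_adjoint V2 = mat_adjoint Pt * mat_adjoint W2" using adj_mult[OF assms(13,14)] assms(15) by simp
    hence "W2 * Pt * (mat_adjoint Pt * mat_adjoint W2) = 1\<^sub>m Ts" using VV assms(15) by simp
    moreover have "W2 * Pt * (mat_adjoint Pt * mat_adjoint W2) = W2 * (Pt * (mat_adjoint Pt * mat_adjoint W2))"
      by (rule assoc_mult_mat[OF assms(13,14) mult_carrier_mat[OF PtH W2H]])
    moreover have "Pt * (mat_adjoint Pt * mat_adjoint W2) = Q * mat_adjoint W2"
      unfolding Q_def by (rule assoc_mult_mat[OF assms(14) PtH W2H, symmetric])
    ultimately have A: "W2 * (Q * mat_adjoint W2) = 1\<^sub>m Ts" by simp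
    have "Q = (mat_adjoint W2 * W2) * Q * (mat_adjoint W2 * W2)" using assms(16) Qc by simp
    also have "\<dots> = mat_adjoint W2 * (W2 * Q) * (mat_adjoint W2 * W2)"
      using assoc_mult_mat[OF W2H assms(13) Qc] by simp
    also have "\<dots> = mat_adjoint W2 * (W2 * Q * mat_adjoint W2) * W2"
      using W2H assms(13) Qc by (simp add: assoc_mult_mat[of _ Ts Ts _ Ts _ Ts])
    also have "W2 * Q * mat_adjoint W2 = 1\<^sub>m Ts"
      using A assoc_mult_mat[OF assms(13) Qc W2H] by simp
    finally show ?thesis unfolding Q_def using W2H assms(13,16) by simp
  qed
  have bound: "cmod (P $$ (i,j)) \<le> 2" if ij: "i < Mt" "j < Ts" for i j
  proof -
    define S where "S = (\<lambda>k. cmod (mat_adjoint Pt $$ (k,j))) ` {..<Mt}"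
    have fin: "finite S" unfolding S_def by simp
    have "\<exists>k<Mt. Pt $$ (j,k) \<noteq> 0"
    proof (rule ccontr)
      assume "\<not> ?thesis"
      hence "(Pt * mat_adjoint Pt) $$ (j,j) = 0" using ij dims PtH
        by (auto simp: scalar_prod_def)
      thus False using PP ij by simp
    qed
    then obtain k where k: "k < Mt" "Pt $$ (j,k) \<noteq> 0" by blast
    have "cmod (mat_adjoint Pt $$ (k,j)) \<in> S" unfolding S_def using k by auto
    hence mpos: "Max S > 0" using k ij dims fin
      by (metis Max_ge adj_index carrier_matD(1,2) complex_cnj_zero_iff complex_mod_cnj conjugate_complex_def order_less_le_trans zero_less_norm_iff)
    have ge: "cmod (mat_adjoint Pt $$ (i,j)) \<le> Max S" unfolding S_def using ij by (intro Max_ge) auto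
    have XI: "Xi $$ (j,j) = complex_of_real (Max S / 2)"
      using assms(19,14) ij PtH unfolding half_max_col_diag_def S_def by auto
    have Xi0: "\<And>l. l < Ts \<Longrightarrow> l \<noteq> j \<Longrightarrow> Xi $$ (l,j) = 0"
      using assms(19,14) ij PtH unfolding half_max_col_diag_def by auto
    have "mat_adjoint Pt $$ (i,j) = (P * Xi) $$ (i,j)" using assms(21) by simp
    also have "\<dots> = (\<Sum>l<Ts. P $$ (i,l) * Xi $$ (l,j))"
      using ij dims Xic by (simp add: scalar_prod_def atLeast0LessThan)
    also have "\<dots> = P $$ (i,j) * Xi $$ (j,j)"
      using ij Xi0 by (subst sum.remove[of _ j]) (auto intro!: sum.neutral)
    finally have eq: "mat_adjoint Pt $$ (i,j) = P $$ (i,j) * complex_of_real (Max S / 2)" using XI by simp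
    have "cmod (P $$ (i,j)) * (Max S / 2) \<le> Max S" using ge mpos
      unfolding eq by (simp add: norm_mult)
    thus ?thesis using mpos by (simp add: field_simps)
  qed
  show ?thesis
  proof (intro conjI part1 allI impI)
    fix i j a \<theta> assume ij: "i < Mt" "j < Ts" and a: "0 \<le> (a::real)"
      and Pij: "P $$ (i,j) = complex_of_real a * exp (\<i> * complex_of_real \<theta>)"
    have "cmod (P $$ (i,j)) = a" using Pij a by (simp add: norm_mult)
    hence "a \<le> 2" using bound[OF ij] by simp
    thus "let P1 = exp (\<i> * complex_of_real (arccos (a / 2) + \<theta>));
            P2 = exp (- \<i> * complex_of_real (arccos (a / 2) - \<theta>))
        in P $$ (i,j) = P1 + P2 \<and> cmod P1 = 1 \<and> cmod P2 = 1"
      using trig[OF a] Pij by (simp add: Let_def nexp1 nexp2)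
  qed
qed

end
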